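(* Let $I$ be a $\ast$-homog ideal of $D$ and put $M(I)=\{x\in D:\ (x,I)^{\ast}\neq D\}$, where $(x,I)$ denotes the ideal $xD+I$. Then $M(I)$ is a maximal $\ast$-ideal of $D$, and it is the unique maximal $\ast$-ideal of $D$ containing $I$.
   Context: $D$ is an integral domain with quotient field $K$, and $\ast$ is a star operation on $D$ of finite character (i.e. for every nonzero fractional ideal $I$, $I^{\ast}=\bigcup\{J^{\ast}: J\subseteq I,\ J \text{ a nonzero finitely generated fractional ideal}\}$). A $\ast$-ideal is a nonzero fractional ideal $I$ with $I^\ast=I$; it is of finite type if $I=J^\ast$ for some nonzero finitely generated $J$. A maximal $\ast$-ideal is an integral $\ast$-ideal maximal among proper integral $\ast$-ideals. A $\ast$-homog ideal of $D$ is an integral $\ast$-ideal $I$ of finite type with $I\subsetneq D$ such that $(J+L)^{\ast}\neq D$ for every pair $J,L$ of proper integral $\ast$-ideals of finite type with $I\subseteq J$ and $I\subseteq L$. *)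

theory Defs
  imports Main
begin

text \<open>The integral domain D is modelled as a subring D of a field K (type 'k)
  such that K is the quotient field of D.\<close>

definition subring_with_qf :: "'k::field set \<Rightarrow> bool" where
  "subring_with_qf D \<longleftrightarrow> 0 \<in> D \<and> 1 \<in> D \<and>
     (\<forall>a\<in>D. \<forall>b\<in>D. a + b \<in> D \<and> a - b \<in> D \<and> a * b \<in> D) \<and>
     (\<forall>x. \<exists>a\<in>D. \<exists>b\<in>D. b \<noteq> 0 \<and> x = a / b)"

definition dsubmod :: "'k::field set \<Rightarrow> 'k set \<Rightarrow> bool" where
  "dsubmod D I \<longleftrightarrow> 0 \<in> I \<and> (\<forall>x\<in>I. \<forall>y\<in>I. x + y \<in> I) \<and>
     (\<forall>d\<in>D. \<forall>x\<in>I. d * x \<in> I)"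

definition nz_frac_ideal :: "'k::field set \<Rightarrow> 'k set \<Rightarrow> bool" where
  "nz_frac_ideal D I \<longleftrightarrow> dsubmod D I \<and> I \<noteq> {0} \<and>
     (\<exists>d\<in>D. d \<noteq> 0 \<and> (\<forall>x\<in>I. d * x \<in> D))"

definition smul_set :: "'k::field \<Rightarrow> 'k set \<Rightarrow> 'k set" where
  "smul_set x I = (\<lambda>y. x * y) ` I"

definition sum_set :: "'k::field set \<Rightarrow> 'k set \<Rightarrow> 'k set" where
  "sum_set A B = {a + b | a b. a \<in> A \<and> b \<in> B}"

definition gen :: "'k::field set \<Rightarrow> 'k set \<Rightarrow> 'k set" where
  "gen D S = \<Inter>{J. dsubmod D J \<and> S \<subseteq> J}"

definition fin_gen :: "'k::field set \<Rightarrow> 'k set \<Rightarrow> bool" where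
  "fin_gen D J \<longleftrightarrow> (\<exists>S. finite S \<and> J = gen D S)"

definition star_op :: "'k::field set \<Rightarrow> ('k set \<Rightarrow> 'k set) \<Rightarrow> bool" where
  "star_op D st \<longleftrightarrow>
     (\<forall>I. nz_frac_ideal D I \<longrightarrow> nz_frac_ideal D (st I)) \<and>
     (\<forall>x. x \<noteq> 0 \<longrightarrow> st (smul_set x D) = smul_set x D) \<and>
     (\<forall>x I. x \<noteq> 0 \<longrightarrow> nz_frac_ideal D I \<longrightarrow> st (smul_set x I) = smul_set x (st I)) \<and>
     (\<forall>I. nz_frac_ideal D I \<longrightarrow> I \<subseteq> st I) \<and>
     (\<forall>I J. nz_frac_ideal D I \<longrightarrow> nz_frac_ideal D J \<longrightarrow> I \<subseteq> J \<longrightarrow> st I \<subseteq> st J) \<and>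
     (\<forall>I. nz_frac_ideal D I \<longrightarrow> st (st I) = st I)"

definition finite_character :: "'k::field set \<Rightarrow> ('k set \<Rightarrow> 'k set) \<Rightarrow> bool" where
  "finite_character D st \<longleftrightarrow>
     (\<forall>I. nz_frac_ideal D I \<longrightarrow>
        st I = \<Union>{st J | J. nz_frac_ideal D J \<and> fin_gen D J \<and> J \<subseteq> I})"

definition star_ideal :: "'k::field set \<Rightarrow> ('k set \<Rightarrow> 'k set) \<Rightarrow> 'k set \<Rightarrow> bool" where
  "star_ideal D st I \<longleftrightarrow> nz_frac_ideal D I \<and> st I = I"

definition finite_type :: "'k::field set \<Rightarrow> ('k set \<Rightarrow> 'k set) \<Rightarrow> 'k set \<Rightarrow> bool" where
  "finite_type D st I \<longleftrightarrow> (\<exists>J. nz_frac_ideal D J \<and> fin_gen D J \<and> I = st J)"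

definition proper_int_star :: "'k::field set \<Rightarrow> ('k set \<Rightarrow> 'k set) \<Rightarrow> 'k set \<Rightarrow> bool" where
  "proper_int_star D st I \<longleftrightarrow> star_ideal D st I \<and> I \<subseteq> D \<and> I \<noteq> D"

definition max_star_ideal :: "'k::field set \<Rightarrow> ('k set \<Rightarrow> 'k set) \<Rightarrow> 'k set \<Rightarrow> bool" where
  "max_star_ideal D st M \<longleftrightarrow> proper_int_star D st M \<and>
     (\<forall>N. proper_int_star D st N \<longrightarrow> M \<subseteq> N \<longrightarrow> N = M)"

definition star_homog :: "'k::field set \<Rightarrow> ('k set \<Rightarrow> 'k set) \<Rightarrow> 'k set \<Rightarrow> bool" where
  "star_homog D st I \<longleftrightarrow> proper_int_star D st I \<and> finite_type D st I \<and>
     (\<forall>J L. proper_int_star D st J \<longrightarrow> finite_type D st J \<longrightarrow>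
            proper_int_star D st L \<longrightarrow> finite_type D st L \<longrightarrow>
            I \<subseteq> J \<longrightarrow> I \<subseteq> L \<longrightarrow> st (sum_set J L) \<noteq> D)"

definition M_of :: "'k::field set \<Rightarrow> ('k set \<Rightarrow> 'k set) \<Rightarrow> 'k set \<Rightarrow> 'k set" where
  "M_of D st I = {x \<in> D. st (sum_set (smul_set x D) I) \<noteq> D}"

end

theory Submission
  imports Defs
begin

locale sw =
  fixes D :: "'k::field set" and st :: "'k set \<Rightarrow> 'k set"
  assumes R: "subring_with_qf D" and S: "star_op D st"
begin

lemma D0: "0 \<in> D" using R by (simp add: subring_with_qf_def)
lemma D1: "1 \<in> D" using R by (simp add: subring_with_qf_def)
lemma Dadd: "a \<in> D \<Longrightarrow> b \<in> D \<Longrightarrow> a + b \<in> D" using R by (simp add: subring_with_qf_def)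
lemma Dmul: "a \<in> D \<Longrightarrow> b \<in> D \<Longrightarrow> a * b \<in> D" using R by (simp add: subring_with_qf_def)

lemma nzI: assumes "dsubmod D A" "A \<subseteq> D" "A \<noteq> {0}" shows "nz_frac_ideal D A"
proof -
  have "\<forall>x\<in>A. 1 * x \<in> D" using assms by auto
  hence "\<exists>d\<in>D. d \<noteq> 0 \<and> (\<forall>x\<in>A. d * x \<in> D)" using D1 by (intro bexI[of _ 1]) auto
  thus ?thesis unfolding nz_frac_ideal_def using assms by auto
qed

lemma nz_dsub: "nz_frac_ideal D A \<Longrightarrow> dsubmod D A" by (simp add: nz_frac_ideal_def)
lemma nz_ne: "nz_frac_ideal D A \<Longrightarrow> A \<noteq> {0}" by (simp add: nz_frac_ideal_def)

lemma st_nz: "nz_frac_ideal D A \<Longrightarrow> nz_frac_ideal D (st A)" using S by (simp add: star_op_def)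
lemma st_ext: "nz_frac_ideal D A \<Longrightarrow> A \<subseteq> st A" using S by (simp add: star_op_def)
lemma st_mono: "nz_frac_ideal D A \<Longrightarrow> nz_frac_ideal D B \<Longrightarrow> A \<subseteq> B \<Longrightarrow> st A \<subseteq> st B"
  using S by (simp add: star_op_def)
lemma st_idem: "nz_frac_ideal D A \<Longrightarrow> st (st A) = st A" using S by (simp add: star_op_def)

lemma smul1: "smul_set 1 D = D" by (simp add: smul_set_def)

lemma st_D: "st D = D"
proof -
  have "st (smul_set 1 D) = smul_set 1 D" using S by (simp add: star_op_def)
  thus ?thesis by (simp add: smul1)
qed

lemma dsub_D: "dsubmod D D" unfolding dsubmod_def using D0 Dadd Dmul by auto

lemma nz_D: "nz_frac_ideal D D"
proof -
  have "D \<noteq> {0}" using D1 by auto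
  thus ?thesis using nzI dsub_D by auto
qed

lemma st_int: "nz_frac_ideal D A \<Longrightarrow> A \<subseteq> D \<Longrightarrow> st A \<subseteq> D"
  using st_mono[of A D] nz_D st_D by auto

lemma sum_dsub: "dsubmod D A \<Longrightarrow> dsubmod D B \<Longrightarrow> dsubmod D (sum_set A B)"
  unfolding dsubmod_def sum_set_def
proof (intro conjI ballI)
  assume A: "0 \<in> A \<and> (\<forall>x\<in>A. \<forall>y\<in>A. x + y \<in> A) \<and> (\<forall>d\<in>D. \<forall>x\<in>A. d * x \<in> A)"
    and B: "0 \<in> B \<and> (\<forall>x\<in>B. \<forall>y\<in>B. x + y \<in> B) \<and> (\<forall>d\<in>D. \<forall>x\<in>B. d * x \<in> B)"
  show "0 \<in> {a + b |a b. a \<in> A \<and> b \<in> B}" using A B by force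
  fix x y assume x: "x \<in> {a + b |a b. a \<in> A \<and> b \<in> B}" and y: "y \<in> {a + b |a b. a \<in> A \<and> b \<in> B}"
  then obtain a b a' b' where "x = a + b" "y = a' + b'" "a \<in> A" "b \<in> B" "a' \<in> A" "b' \<in> B" by auto
  moreover have "x + y = (a + a') + (b + b')" using calculation by (simp add: algebra_simps)
  ultimately show "x + y \<in> {a + b |a b. a \<in> A \<and> b \<in> B}" using A B by blast
next
  fix d x assume A: "0 \<in> A \<and> (\<forall>x\<in>A. \<forall>y\<in>A. x + y \<in> A) \<and> (\<forall>d\<in>D. \<forall>x\<in>A. d * x \<in> A)"
    and B: "0 \<in> B \<and> (\<forall>x\<in>B. \<forall>y\<in>B. x + y \<in> B) \<and> (\<forall>d\<in>D. \<forall>x\<in>B. d * x \<in> B)"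
    and d: "d \<in> D" and x: "x \<in> {a + b |a b. a \<in> A \<and> b \<in> B}"
  then obtain a b where "x = a + b" "a \<in> A" "b \<in> B" by auto
  moreover have "d * x = d * a + d * b" using calculation by (simp add: algebra_simps)
  ultimately show "d * x \<in> {a + b |a b. a \<in> A \<and> b \<in> B}" using A B d by blast
qed

lemma sum_sub: "A \<subseteq> D \<Longrightarrow> B \<subseteq> D \<Longrightarrow> sum_set A B \<subseteq> D"
  unfolding sum_set_def using Dadd by auto

lemma sum_left: "dsubmod D B \<Longrightarrow> A \<subseteq> sum_set A B"
  unfolding sum_set_def dsubmod_def by force

lemma sum_right: "dsubmod D A \<Longrightarrow> B \<subseteq> sum_set A B"
  unfolding sum_set_def dsubmod_def by force

lemma sum_le: "dsubmod D C \<Longrightarrow> A \<subseteq> C \<Longrightarrow> B \<subseteq> C \<Longrightarrow> sum_set A B \<subseteq> C"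
  unfolding sum_set_def dsubmod_def by blast

lemma sum_mono: "A \<subseteq> A' \<Longrightarrow> B \<subseteq> B' \<Longrightarrow> sum_set A B \<subseteq> sum_set A' B'"
  unfolding sum_set_def by blast

lemma sum_comm: "sum_set A B = sum_set B A"
  unfolding sum_set_def by (auto; metis add.commute)

lemma smul_dsub: "x \<in> D \<Longrightarrow> dsubmod D (smul_set x D)"
  unfolding dsubmod_def smul_set_def
proof (intro conjI ballI)
  assume x: "x \<in> D"
  show "0 \<in> (*) x ` D" using D0 by force
  fix a b assume "a \<in> (*) x ` D" "b \<in> (*) x ` D"
  then obtain u v where "a = x * u" "b = x * v" "u \<in> D" "v \<in> D" by auto
  thus "a + b \<in> (*) x ` D" by (metis Dadd distrib_left image_eqI)
next
  fix d a assume "d \<in> D" "a \<in> (*) x ` D"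
  then obtain u where "a = x * u" "u \<in> D" by auto
  thus "d * a \<in> (*) x ` D" using Dmul \<open>d \<in> D\<close>
    by (metis image_eqI mult.left_commute)
qed

lemma smul_sub: "x \<in> D \<Longrightarrow> smul_set x D \<subseteq> D"
  unfolding smul_set_def using Dmul by auto

lemma smul_in: "x \<in> smul_set x D"
  unfolding smul_set_def using D1 by force

lemma smul_le: "dsubmod D A \<Longrightarrow> x \<in> A \<Longrightarrow> smul_set x D \<subseteq> A"
  unfolding smul_set_def dsubmod_def by (auto simp: mult.commute)

lemma gen_dsub: "dsubmod D (gen D T)"
  unfolding gen_def dsubmod_def by auto

lemma gen_sup: "T \<subseteq> gen D T"
  unfolding gen_def by auto

lemma gen_least: "dsubmod D A \<Longrightarrow> T \<subseteq> A \<Longrightarrow> gen D T \<subseteq> A"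
  unfolding gen_def by auto

lemma gen_single: assumes "x \<in> D" shows "gen D {x} = smul_set x D"
proof
  show "gen D {x} \<subseteq> smul_set x D" using gen_least[of "smul_set x D" "{x}"] smul_dsub smul_in assms by auto
  have "x \<in> gen D {x}" using gen_sup by auto
  thus "smul_set x D \<subseteq> gen D {x}" using smul_le[OF gen_dsub] by auto
qed

lemma gen_Un: "gen D (T \<union> U) = sum_set (gen D T) (gen D U)"
proof
  show "gen D (T \<union> U) \<subseteq> sum_set (gen D T) (gen D U)"
    apply (rule gen_least)
    using sum_dsub gen_dsub sum_left sum_right gen_sup by blast+
  show "sum_set (gen D T) (gen D U) \<subseteq> gen D (T \<union> U)"
    apply (rule sum_le[OF gen_dsub])
    using gen_least gen_dsub gen_sup by (metis Un_subset_iff)+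
qed

definition iid where "iid A \<longleftrightarrow> dsubmod D A \<and> A \<subseteq> D \<and> A \<noteq> {0}"

lemma iid_nz: "iid A \<Longrightarrow> nz_frac_ideal D A" using nzI iid_def by auto

lemma iid_st: "iid A \<Longrightarrow> iid (st A)"
  unfolding iid_def using st_nz[OF iid_nz] st_int[OF iid_nz] st_ext[OF iid_nz] nz_dsub
  by (metis iid_def subset_singletonD  dsubmod_def empty_iff subset_eq)

lemma iid_sum: "iid A \<Longrightarrow> iid B \<Longrightarrow> iid (sum_set A B)"
  unfolding iid_def using sum_dsub sum_sub sum_right
  by (metis subset_singletonD dsubmod_def empty_iff)

lemma iid_sum2: "dsubmod D A \<Longrightarrow> A \<subseteq> D \<Longrightarrow> iid B \<Longrightarrow> iid (sum_set A B)"
proof -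
  assume a: "dsubmod D A" "A \<subseteq> D" "iid B"
  have "B \<subseteq> sum_set A B" using sum_right a by auto
  moreover have "B \<noteq> {0}" using a(3) unfolding iid_def by auto
  moreover have "0 \<in> B" using a(3) unfolding iid_def dsubmod_def by auto
  ultimately have "sum_set A B \<noteq> {0}" by blast
  thus ?thesis using a sum_dsub sum_sub iid_def by auto
qed

lemma st_sum_st: assumes "dsubmod D A" "A \<subseteq> D" "iid B"
  shows "st (sum_set A (st B)) = st (sum_set A B)"
proof -
  have sB: "iid (st B)" using iid_st assms by auto
  have n1: "nz_frac_ideal D (sum_set A B)" using iid_sum2 assms iid_nz by auto
  have n2: "nz_frac_ideal D (sum_set A (st B))" using iid_sum2 assms sB iid_nz by auto
  have "sum_set A B \<subseteq> sum_set A (st B)" using sum_mono st_ext iid_nz assms by blast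
  hence a: "st (sum_set A B) \<subseteq> st (sum_set A (st B))" using st_mono n1 n2 by auto
  have "sum_set A (st B) \<subseteq> st (sum_set A B)"
  proof (rule sum_le)
    show "dsubmod D (st (sum_set A B))" using nz_dsub st_nz n1 by auto
    show "A \<subseteq> st (sum_set A B)" using sum_left st_ext n1 assms iid_def by blast
    have "B \<subseteq> sum_set A B" using sum_right assms iid_def by auto
    thus "st B \<subseteq> st (sum_set A B)" using st_mono n1 assms iid_nz by auto
  qed
  hence "st (sum_set A (st B)) \<subseteq> st (st (sum_set A B))" using st_mono n2 st_nz n1 by auto
  thus ?thesis using a st_idem n1 by auto
qed

end

locale hom = sw +
  fixes I
  assumes FC: "finite_character D st" and H: "star_homog D st I"
begin

definition M where "M = M_of D st I"

definition F where "F A \<longleftrightarrow> proper_int_star D st A \<and> finite_type D st A \<and> I \<subseteq> A"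

lemma pis: "proper_int_star D st A \<Longrightarrow> iid A \<and> st A = A \<and> A \<noteq> D"
  unfolding proper_int_star_def star_ideal_def iid_def using nz_dsub nz_ne by auto

lemma pisI: "iid A \<Longrightarrow> st A = A \<Longrightarrow> A \<noteq> D \<Longrightarrow> proper_int_star D st A"
  unfolding proper_int_star_def star_ideal_def using iid_nz iid_def by auto

lemma FI: "F I" using H unfolding F_def star_homog_def by auto

lemma Iiid: "iid I" using FI F_def pis by auto

lemma ft: "finite_type D st A \<Longrightarrow> A \<subseteq> D \<Longrightarrow> \<exists>T. finite T \<and> iid (gen D T) \<and> A = st (gen D T)"
  unfolding finite_type_def fin_gen_def
proof (elim exE conjE)
  fix J T assume J: "nz_frac_ideal D J" "finite T" "J = gen D T" "A = st J" "A \<subseteq> D"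
  have "J \<subseteq> D" using st_ext J by auto
  hence "iid J" using J nz_dsub nz_ne unfolding iid_def by auto
  thus "\<exists>T. finite T \<and> iid (gen D T) \<and> A = st (gen D T)"
    using J by auto
qed

lemma ftI: "finite T \<Longrightarrow> iid (gen D T) \<Longrightarrow> finite_type D st (st (gen D T))"
  unfolding finite_type_def fin_gen_def using iid_nz by auto

lemma F_close: assumes "F A" "F B" shows "F (st (sum_set A B))"
proof -
  have A: "iid A" "st A = A" "A \<noteq> D" "finite_type D st A" "I \<subseteq> A"
    using assms pis F_def by auto
  have B: "iid B" "st B = B" "B \<noteq> D" "finite_type D st B" "I \<subseteq> B"
    using assms pis F_def by auto
  have AB: "iid (sum_set A B)" using iid_sum A B by auto
  have hh: "\<And>J L. proper_int_star D st J \<Longrightarrow> finite_type D st J \<Longrightarrow>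
            proper_int_star D st L \<Longrightarrow> finite_type D st L \<Longrightarrow>
            I \<subseteq> J \<Longrightarrow> I \<subseteq> L \<Longrightarrow> st (sum_set J L) \<noteq> D"
    using H unfolding star_homog_def by blast
  have "proper_int_star D st A" "proper_int_star D st B" using assms unfolding F_def by auto
  hence ne: "st (sum_set A B) \<noteq> D" using hh A B by blast
  obtain TA where TA: "finite TA" "iid (gen D TA)" "A = st (gen D TA)" using ft A iid_def by blast
  obtain TB where TB: "finite TB" "iid (gen D TB)" "B = st (gen D TB)" using ft B iid_def by blast
  have "st (sum_set A B) = st (sum_set A (gen D TB))"
    using st_sum_st[of A, OF _ _ TB(2)] A(1) iid_def TB(3) by simp
  also have "\<dots> = st (sum_set (gen D TB) A)" by (simp add: sum_comm)
  also have "\<dots> = st (sum_set (gen D TB) (gen D TA))"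
    using st_sum_st[of "gen D TB", OF _ _ TA(2)] TB(2) iid_def TA(3) by simp
  also have "\<dots> = st (gen D (TB \<union> TA))" by (simp add: gen_Un)
  finally have eq: "st (sum_set A B) = st (gen D (TB \<union> TA))" .
  have "iid (gen D (TB \<union> TA))" using gen_Un iid_sum TA TB by simp
  hence "finite_type D st (st (sum_set A B))" using eq ftI TA TB by simp
  moreover have "iid (st (sum_set A B))" using iid_st AB by auto
  moreover have "st (st (sum_set A B)) = st (sum_set A B)" using st_idem iid_nz AB by auto
  moreover have "I \<subseteq> st (sum_set A B)"
    using A(5) sum_left st_ext iid_nz AB B(1) iid_def by blast
  ultimately show ?thesis using pisI ne F_def by auto
qed

lemma sub_M: assumes "proper_int_star D st A" "I \<subseteq> A" shows "A \<subseteq> M"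
proof
  fix y assume y: "y \<in> A"
  have A: "iid A" "st A = A" "A \<noteq> D" using pis assms by auto
  have yD: "y \<in> D" using y A iid_def by auto
  have dA: "dsubmod D A" using A unfolding iid_def by auto
  have sub: "sum_set (smul_set y D) I \<subseteq> A"
    using sum_le[OF dA smul_le[OF dA y] assms(2)] .
  have n: "iid (sum_set (smul_set y D) I)"
    using iid_sum2[OF smul_dsub[OF yD] smul_sub[OF yD] Iiid] .
  have "st (sum_set (smul_set y D) I) \<subseteq> A" using st_mono[OF iid_nz[OF n] iid_nz[OF A(1)] sub] A by simp
  hence "st (sum_set (smul_set y D) I) \<noteq> D" using A iid_def by auto
  thus "y \<in> M" using yD unfolding M_def M_of_def by auto
qed

lemma F_x: assumes "x \<in> M" shows "F (st (sum_set (smul_set x D) I)) \<and> x \<in> st (sum_set (smul_set x D) I)"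
proof -
  have x: "x \<in> D" "st (sum_set (smul_set x D) I) \<noteq> D" using assms unfolding M_def M_of_def by auto
  have n: "iid (sum_set (smul_set x D) I)"
    using iid_sum2[OF smul_dsub[OF x(1)] smul_sub[OF x(1)] Iiid] .
  obtain T where T: "finite T" "iid (gen D T)" "I = st (gen D T)" using ft FI F_def Iiid iid_def by blast
  have g: "gen D {x} = smul_set x D" using gen_single x by simp
  let ?A = "sum_set (smul_set x D) I"
  have sd: "dsubmod D (smul_set x D)" "smul_set x D \<subseteq> D" using smul_dsub smul_sub x by auto
  have gx: "gen D ({x} \<union> T) = sum_set (smul_set x D) (gen D T)" by (simp only: gen_Un g)
  have "st ?A = st (sum_set (smul_set x D) (gen D T))"
    using st_sum_st[OF sd T(2)] T(3) by simp
  also have "\<dots> = st (gen D ({x} \<union> T))" by (simp only: gx)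
  finally have eq: "st ?A = st (gen D ({x} \<union> T))" .
  have "iid (gen D ({x} \<union> T))" using iid_sum2[OF sd T(2)] by (simp only: gx)
  hence "finite_type D st (st ?A)" using eq ftI T by simp
  moreover have "iid (st ?A)" using iid_st n by auto
  moreover have "st (st ?A) = st ?A" using st_idem iid_nz n by auto
  moreover have "?A \<subseteq> st ?A" using st_ext iid_nz n by auto
  moreover have "I \<subseteq> ?A" using sum_right sd by auto
  moreover have "x \<in> ?A" using sum_left[of I "smul_set x D"] Iiid iid_def smul_in by auto
  ultimately show ?thesis using pisI x F_def by auto
qed

lemma F_sub_M: "F A \<Longrightarrow> A \<subseteq> M" using sub_M F_def by auto

lemma fin_cover: "finite T \<Longrightarrow> T \<subseteq> M \<Longrightarrow> \<exists>A. F A \<and> T \<subseteq> A"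
proof (induction T rule: finite_induct)
  case empty
  then show ?case using FI by auto
next
  case (insert s T)
  then obtain A where A: "F A" "T \<subseteq> A" by auto
  have B: "F (st (sum_set (smul_set s D) I)) \<and> s \<in> st (sum_set (smul_set s D) I)"
    using F_x insert by auto
  let ?B = "st (sum_set (smul_set s D) I)"
  have C: "F (st (sum_set A ?B))" using F_close A B by auto
  have "iid A" "iid ?B" using A B F_def pis by auto
  hence "sum_set A ?B \<subseteq> st (sum_set A ?B)" "A \<subseteq> sum_set A ?B" "?B \<subseteq> sum_set A ?B"
    using st_ext iid_nz iid_sum sum_left sum_right iid_def by auto
  thus ?case using C A B by blast
qed

lemma IM: "I \<subseteq> M" using F_sub_M FI by auto

lemma I0: "0 \<in> I" using Iiid unfolding iid_def dsubmod_def by auto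
lemma Inz: "I \<noteq> {0}" using Iiid unfolding iid_def by auto

lemma MD: "M \<subseteq> D" unfolding M_def M_of_def by auto

lemma M_dsub: "dsubmod D M"
  unfolding dsubmod_def
proof (intro conjI ballI)
  show "0 \<in> M" using IM I0 by auto
  fix x y assume "x \<in> M" "y \<in> M"
  then obtain A where A: "F A" "{x, y} \<subseteq> A" using fin_cover[of "{x,y}"] by auto
  hence "iid A" using F_def pis by auto
  hence "dsubmod D A" unfolding iid_def by auto
  hence "x + y \<in> A" using A unfolding dsubmod_def by auto
  thus "x + y \<in> M" using F_sub_M A by auto
next
  fix d x assume "d \<in> D" "x \<in> M"
  then obtain A where A: "F A" "{x} \<subseteq> A" using fin_cover[of "{x}"] by auto
  hence "iid A" using F_def pis by auto
  hence "dsubmod D A" unfolding iid_def by auto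
  hence "d * x \<in> A" using A \<open>d \<in> D\<close> unfolding dsubmod_def by auto
  thus "d * x \<in> M" using F_sub_M A by auto
qed

lemma M_iid: "iid M"
proof -
  have "M \<noteq> {0}" using IM I0 Inz by blast
  thus ?thesis using M_dsub MD unfolding iid_def by auto
qed

lemma M_st: "st M = M"
proof
  show "M \<subseteq> st M" using st_ext iid_nz M_iid by auto
  show "st M \<subseteq> M"
  proof
    fix z assume "z \<in> st M"
    then obtain J where J: "nz_frac_ideal D J" "fin_gen D J" "J \<subseteq> M" "z \<in> st J"
      using FC iid_nz[OF M_iid] unfolding finite_character_def by blast
    then obtain T where T: "finite T" "J = gen D T" unfolding fin_gen_def by auto
    have "T \<subseteq> M" using gen_sup T J by blast
    then obtain A where A: "F A" "T \<subseteq> A" using fin_cover[OF T(1)] by blast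
    have Ai: "iid A" "st A = A" using A F_def pis by auto
    have "J \<subseteq> A" using gen_least T A Ai iid_def by auto
    hence "st J \<subseteq> A" using st_mono J(1) iid_nz Ai by fastforce
    thus "z \<in> M" using J F_sub_M A by auto
  qed
qed

lemma M_ne: "M \<noteq> D"
proof
  assume "M = D"
  hence "1 \<in> M" using D1 by auto
  hence ne: "st (sum_set (smul_set 1 D) I) \<noteq> D" unfolding M_def M_of_def by auto
  have "sum_set D I \<subseteq> D" using sum_sub Iiid iid_def by auto
  moreover have "D \<subseteq> sum_set D I" using sum_left Iiid iid_def by auto
  ultimately have "sum_set D I = D" by auto
  thus False using ne smul1 st_D by simp
qed

lemma M_pis: "proper_int_star D st M" using pisI M_iid M_st M_ne by auto

lemma main: "max_star_ideal D st M \<and> I \<subseteq> M \<and>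
         (\<forall>P. max_star_ideal D st P \<and> I \<subseteq> P \<longrightarrow> P = M)"
proof (intro conjI allI impI)
  show "max_star_ideal D st M"
    unfolding max_star_ideal_def using M_pis sub_M IM by blast
  show "I \<subseteq> M" by (rule IM)
  fix P assume P: "max_star_ideal D st P \<and> I \<subseteq> P"
  hence "P \<subseteq> M" using sub_M max_star_ideal_def by auto
  thus "P = M" using P M_pis unfolding max_star_ideal_def by auto
qed

end

theorem propositionA:
  fixes D :: "'k::field set" and st :: "'k set \<Rightarrow> 'k set" and I :: "'k set"
  assumes "subring_with_qf D"
    and "star_op D st"
    and "finite_character D st"
    and "star_homog D st I"
  shows "max_star_ideal D st (M_of D st I) \<and> I \<subseteq> M_of D st I \<and>
         (\<forall>P. max_star_ideal D st P \<and> I \<subseteq> P \<longrightarrow> P = M_of D st I)"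
proof -
  interpret hom D st I using assms by (unfold_locales) auto
  show ?thesis using main unfolding M_def .
qed

end
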